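(* In the asymptotic framework described in the context, if $F_{\Sigma_n}(u)\to F_\Sigma(u)$ almost surely for almost every $u>0$, then $\lim_{n,d\to\infty}\frac{d_\lambda^n}{n}$ exists for every $\lambda>0$.
   Context: Asymptotic framework: a sequence of positive semidefinite matrices $\Sigma_n\in\mathbb{R}^{d\times d}$ indexed by $n$, with $d=d(n)$, $n,d\to\infty$, $d/n\to y\in[0,1)$. $F_{\Sigma_n}(u)=d^{-1}\sum_{i=1}^d\mathbb{I}(\lambda_i(\Sigma_n)\le u)$ is the empirical spectral distribution and $F_\Sigma$ a limiting distribution function. $d_\lambda^n=\mathrm{tr}(\Sigma_n(\Sigma_n+\lambda I)^{-1})$. *)

theory Defs
  imports "HOL-Probability.Probability" "Jordan_Normal_Form.Gauss_Jordan_Elimination"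
          "Jordan_Normal_Form.Char_Poly"
begin

definition psd_mat :: "nat \<Rightarrow> real mat \<Rightarrow> bool" where
  "psd_mat d A \<longleftrightarrow> A \<in> carrier_mat d d \<and> transpose_mat A = A \<and>
     (\<forall>v \<in> carrier_vec d. 0 \<le> v \<bullet> (A *\<^sub>v v))"

(* empirical spectral distribution: F_A(u) = d^{-1} #{i. lambda_i(A) <= u},
   eigenvalues counted with algebraic multiplicity (order as roots of char_poly) *)
definition esd :: "nat \<Rightarrow> real mat \<Rightarrow> real \<Rightarrow> real" where
  "esd d A u = (\<Sum>a\<in>{a. poly (char_poly A) a = 0 \<and> a \<le> u}. real (order a (char_poly A))) / real d"

definition dlam :: "nat \<Rightarrow> real mat \<Rightarrow> real \<Rightarrow> real" where
  "dlam d A lam = (let B = A * the (mat_inverse (A + lam \<cdot>\<^sub>m 1\<^sub>m d)) in \<Sum>i<d. B $$ (i, i))"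

end

theory Submission imports Defs "Jordan_Normal_Form.Schur_Decomposition" "HOL-Real_Asymp.Real_Asymp"
begin

lemma psd_quad:
  assumes "psd_mat n A"
  shows "0 \<le> (\<Sum>i<n. \<Sum>j<n. A $$ (i,j) * (z i * z j))"
proof -
  have A: "A \<in> carrier_mat n n" using assms unfolding psd_mat_def by auto
  let ?x = "vec n z"
  have "0 \<le> ?x \<bullet> (A *\<^sub>v ?x)" using assms unfolding psd_mat_def by auto
  also have "?x \<bullet> (A *\<^sub>v ?x) = (\<Sum>i<n. z i * (\<Sum>j<n. A $$ (i,j) * z j))"
    using A by (auto simp: scalar_prod_def mult_mat_vec_def row_def atLeast0LessThan intro!: sum.cong)
  also have "\<dots> = (\<Sum>i<n. \<Sum>j<n. A $$ (i,j) * (z i * z j))"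
    by (auto simp: sum_distrib_left intro!: sum.cong)
  finally show ?thesis .
qed

lemma psd_eig:
  fixes A :: "real mat"
  assumes psd: "psd_mat n A" and ev: "eigenvector (map_mat complex_of_real A) v a"
  shows "Im a = 0 \<and> 0 \<le> Re a"
proof -
  have A: "A \<in> carrier_mat n n" and sym: "\<And>i j. i < n \<Longrightarrow> j < n \<Longrightarrow> A $$ (j,i) = A $$ (i,j)"
    using psd unfolding psd_mat_def
    by (auto, metis carrier_matD(1) carrier_matD(2) index_transpose_mat(1))
  let ?Ac = "map_mat complex_of_real A"
  have v: "v \<in> carrier_vec n" "v \<noteq> 0\<^sub>v n" and eq: "?Ac *\<^sub>v v = a \<cdot>\<^sub>v v"
    using ev A unfolding eigenvector_def by auto
  define x where "x i = Re (v $ i)" for i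
  define y where "y i = Im (v $ i)" for i
  define S where "S = (\<Sum>i<n. cnj (v $ i) * (?Ac *\<^sub>v v) $ i)"
  have S1: "S = (\<Sum>i<n. cnj (v $ i) * (\<Sum>j<n. of_real (A $$ (i,j)) * v $ j))"
    unfolding S_def using A v
    by (auto simp: scalar_prod_def mult_mat_vec_def row_def atLeast0LessThan intro!: sum.cong)
  define r where "r = (\<Sum>i<n. (cmod (v $ i))^2)"
  have cz: "\<And>z. cnj z * (a * z) = a * of_real ((cmod z)^2)"
  proof -
    fix z :: complex
    have "z * cnj z = of_real ((cmod z)^2)" by (rule complex_norm_square[symmetric])
    then show "cnj z * (a * z) = a * of_real ((cmod z)^2)" by (metis mult.commute mult.left_commute)
  qed
  have S2: "S = a * of_real r"
    unfolding S_def eq r_def using v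
    by (auto simp: sum_distrib_left cz intro!: sum.cong)
  have "\<exists>i<n. v $ i \<noteq> 0" using v by (metis eq_vecI carrier_vecD index_zero_vec(1,2))
  then obtain i0 where i0: "i0 < n" "v $ i0 \<noteq> 0" by auto
  have rpos: "r > 0" unfolding r_def
    by (rule sum_pos2[of _ i0]) (use i0 in auto)
  have ReS: "Re S = (\<Sum>i<n. \<Sum>j<n. A $$ (i,j) * (x i * x j)) + (\<Sum>i<n. \<Sum>j<n. A $$ (i,j) * (y i * y j))"
  proof -
    have t: "Re (cnj (v$i) * (of_real (A$$(i,j)) * v$j)) = A $$ (i,j) * (x i * x j) + A $$ (i,j) * (y i * y j)" for i j
      by (simp add: x_def y_def algebra_simps)
    have "Re S = (\<Sum>i<n. \<Sum>j<n. A $$ (i,j) * (x i * x j) + A $$ (i,j) * (y i * y j))"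
      unfolding S1 Re_sum sum_distrib_left t ..
    then show ?thesis by (simp add: sum.distrib)
  qed
  have ImS: "Im S = (\<Sum>i<n. \<Sum>j<n. A $$ (i,j) * (x i * y j)) - (\<Sum>i<n. \<Sum>j<n. A $$ (i,j) * (y i * x j))"
  proof -
    have t: "Im (cnj (v$i) * (of_real (A$$(i,j)) * v$j)) = A $$ (i,j) * (x i * y j) - A $$ (i,j) * (y i * x j)" for i j
      by (simp add: x_def y_def algebra_simps)
    have "Im S = (\<Sum>i<n. \<Sum>j<n. A $$ (i,j) * (x i * y j) - A $$ (i,j) * (y i * x j))"
      unfolding S1 Im_sum sum_distrib_left t ..
    then show ?thesis by (simp add: sum_subtractf)
  qed
  have "(\<Sum>i<n. \<Sum>j<n. A $$ (i,j) * (y i * x j)) = (\<Sum>j<n. \<Sum>i<n. A $$ (i,j) * (y i * x j))"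
    by (rule sum.swap)
  also have "\<dots> = (\<Sum>i<n. \<Sum>j<n. A $$ (i,j) * (x i * y j))"
    using sym by (auto intro!: sum.cong simp: mult.commute)
  finally have "Im S = 0" using ImS by simp
  moreover have "Re S \<ge> 0" using ReS psd_quad[OF psd, of x] psd_quad[OF psd, of y] by simp
  ultimately show ?thesis using S2 rpos
    by (simp add: zero_le_mult_iff)
qed

lemma of_real_poly_mult: "map_poly (of_real::real\<Rightarrow>complex) (p*q) = map_poly of_real p * map_poly of_real q"
  by (induct p) (auto simp: hom_distribs)

lemma psd_factor:
  assumes psd: "psd_mat n A"
  shows "\<exists>es. length es = n \<and> (\<forall>e\<in>set es. 0 \<le> e) \<and> char_poly A = (\<Prod>e\<leftarrow>es. [:-e,1:])"
proof -
  have A: "A \<in> carrier_mat n n" using psd unfolding psd_mat_def by auto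
  let ?Ac = "map_mat complex_of_real A"
  have Ac: "?Ac \<in> carrier_mat n n" using A by auto
  obtain as where as: "char_poly ?Ac = (\<Prod>a\<leftarrow>as. [:-a,1:])" "length as = n"
    using char_poly_factorized[OF Ac] by auto
  have real: "Im a = 0 \<and> 0 \<le> Re a" if a: "a \<in> set as" for a
  proof -
    have "poly (char_poly ?Ac) a = 0" unfolding as(1) by (rule linear_poly_root[OF a])
    hence "eigenvalue ?Ac a" using eigenvalue_root_char_poly[OF Ac] by simp
    then obtain v where "eigenvector ?Ac v a" unfolding eigenvalue_def by auto
    from psd_eig[OF psd this] show ?thesis .
  qed
  define es where "es = map Re as"
  have as_es: "as = map complex_of_real es"
    unfolding es_def by (rule nth_equalityI) (auto simp: complex_eq_iff real)
  have mp: "map_poly complex_of_real (\<Prod>e\<leftarrow>es. [:-e,1:]) = (\<Prod>a\<leftarrow>map complex_of_real es. [:-a,1:])"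
    by (induct es) (simp_all add: of_real_poly_mult del: mult_pCons_left)
  have "map_poly complex_of_real (char_poly A) = char_poly ?Ac"
    by (rule of_real_hom.char_poly_hom[OF A, symmetric])
  also have "\<dots> = map_poly complex_of_real (\<Prod>e\<leftarrow>es. [:-e,1:])" unfolding as(1) as_es mp ..
  finally have "char_poly A = (\<Prod>e\<leftarrow>es. [:-e,1:])"
    by (metis of_real_hom.coeff_map_poly_hom of_real_eq_iff poly_eqI)
  moreover have "length es = n" using as(2) by (simp add: es_def)
  moreover have "\<forall>e\<in>set es. 0 \<le> e" using real by (auto simp: es_def)
  ultimately show ?thesis by blast
qed

lemma order_linear_prod: "Polynomial.order a (\<Prod>e\<leftarrow>es. [:-e,1:]) = count_list es (a::real)"
proof (induct es)
  case Nil then show ?case by (simp add: order_0I)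
next
  case (Cons e es)
  have nz: "(\<Prod>e\<leftarrow>es. [:-e,1:]) \<noteq> (0 :: real poly)"
    by (auto simp: prod_list_zero_iff)
  have "Polynomial.order a ([:-e,1:] * (\<Prod>e\<leftarrow>es. [:-e,1:])) = Polynomial.order a [:-e,1:] + Polynomial.order a (\<Prod>e\<leftarrow>es. [:-e,1:])"
    using nz by (intro order_mult) (metis mult_eq_0_iff pCons_eq_0_iff zero_neq_one)
  then show ?case using Cons by (simp add: order_linear')
qed

lemma count_list_filter: "P a \<Longrightarrow> count_list (filter P xs) a = count_list xs a"
  by (induct xs) auto

lemma esd_formula:
  assumes cp: "char_poly A = (\<Prod>e\<leftarrow>es. [:-e,1:])"
  shows "esd d A u = real (length (filter (\<lambda>e. e \<le> u) es)) / real d"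
proof -
  have set: "{a. poly (char_poly A) a = 0 \<and> a \<le> u} = set (filter (\<lambda>e. e \<le> u) es)"
    unfolding cp by (auto simp: poly_prod_list_zero_iff)
  have "(\<Sum>a\<in>{a. poly (char_poly A) a = 0 \<and> a \<le> u}. real (Polynomial.order a (char_poly A)))
      = real (\<Sum>a\<in>set (filter (\<lambda>e. e \<le> u) es). count_list (filter (\<lambda>e. e \<le> u) es) a)"
    unfolding set of_nat_sum by (intro sum.cong refl) (auto simp: cp order_linear_prod count_list_filter)
  also have "\<dots> = real (length (filter (\<lambda>e. e \<le> u) es))"
    by (subst sum_count_set) auto
  finally show ?thesis unfolding esd_def by simp
qed

lemma mult_entry: "A \<in> carrier_mat n n \<Longrightarrow> B \<in> carrier_mat n n \<Longrightarrow> i < n \<Longrightarrow> j < n \<Longrightarrow>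
  (A * B) $$ (i,j) = (\<Sum>k<n. A $$ (i,k) * B $$ (k,j))"
  by (auto simp: scalar_prod_def atLeast0LessThan intro!: sum.cong)

lemma trace_comm_sq:
  fixes A B :: "'a::comm_ring_1 mat"
  assumes "A \<in> carrier_mat n n" "B \<in> carrier_mat n n"
  shows "(\<Sum>i<n. (A * B) $$ (i,i)) = (\<Sum>i<n. (B * A) $$ (i,i))"
proof -
  have "(\<Sum>i<n. (A * B) $$ (i,i)) = (\<Sum>i<n. \<Sum>k<n. A $$ (i,k) * B $$ (k,i))"
    using assms by (auto simp del: index_mult_mat simp add: mult_entry intro!: sum.cong)
  also have "\<dots> = (\<Sum>k<n. \<Sum>i<n. B $$ (k,i) * A $$ (i,k))"
    apply (subst sum.swap)
    apply (rule sum.cong, rule refl)+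
    apply (rule mult.commute)
    done
  also have "\<dots> = (\<Sum>i<n. (B * A) $$ (i,i))"
    using assms by (auto simp del: index_mult_mat simp add: mult_entry intro!: sum.cong)
  finally show ?thesis .
qed

lemma sum_single_nz:
  assumes "j < (n::nat)" "\<And>k. k < n \<Longrightarrow> k \<noteq> j \<Longrightarrow> f k = (0::'a::comm_monoid_add)"
  shows "(\<Sum>k<n. f k) = f j"
proof -
  have "(\<Sum>k<n. f k) = f j + (\<Sum>k\<in>{..<n} - {j}. f k)"
    using assms(1) by (intro sum.remove) auto
  also have "(\<Sum>k\<in>{..<n} - {j}. f k) = 0" using assms(2) by (intro sum.neutral) auto
  finally show ?thesis by simp
qed

lemma tri_left_inv_lower:
  fixes T R :: "'a::field mat"
  assumes T: "T \<in> carrier_mat n n" and R: "R \<in> carrier_mat n n"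
    and ut: "upper_triangular T" and dg: "\<And>i. i < n \<Longrightarrow> T $$ (i,i) \<noteq> 0"
    and inv: "R * T = 1\<^sub>m n"
  shows "j < i \<Longrightarrow> i < n \<Longrightarrow> R $$ (i,j) = 0"
proof (induct j arbitrary: i rule: less_induct)
  case (less j)
  have jn: "j < n" using less by auto
  have "(R * T) $$ (i,j) = 0" using inv less jn by simp
  also have "(R * T) $$ (i,j) = (\<Sum>k<n. R $$ (i,k) * T $$ (k,j))"
    using T R less jn by (simp del: index_mult_mat add: mult_entry)
  also have "\<dots> = R $$ (i,j) * T $$ (j,j)"
  proof (rule sum_single_nz[OF jn])
    fix k assume k: "k < n" "k \<noteq> j"
    show "R $$ (i,k) * T $$ (k,j) = 0"
    proof (cases "k < j")
      case True then show ?thesis using less(1)[of k i] less(2,3) by simp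
    next
      case False then have "j < k" using k by simp
      then have "T $$ (k,j) = 0" using ut T k by (auto simp: upper_triangular_def)
      then show ?thesis by simp
    qed
  qed
  finally show ?case using dg[OF jn] by simp
qed

lemma tri_left_inv_diag:
  fixes T R :: "'a::field mat"
  assumes T: "T \<in> carrier_mat n n" and R: "R \<in> carrier_mat n n"
    and ut: "upper_triangular T" and dg: "\<And>i. i < n \<Longrightarrow> T $$ (i,i) \<noteq> 0"
    and inv: "R * T = 1\<^sub>m n" and i: "i < n"
  shows "R $$ (i,i) = 1 / T $$ (i,i)"
proof -
  have "1 = (R * T) $$ (i,i)" using inv i by simp
  also have "\<dots> = (\<Sum>k<n. R $$ (i,k) * T $$ (k,i))"
    using T R i by (simp del: index_mult_mat add: mult_entry)
  also have "\<dots> = R $$ (i,i) * T $$ (i,i)"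
  proof (rule sum_single_nz[OF i])
    fix k assume k: "k < n" "k \<noteq> i"
    show "R $$ (i,k) * T $$ (k,i) = 0"
    proof (cases "k < i")
      case True then show ?thesis using tri_left_inv_lower[OF assms(1-5) True i] by simp
    next
      case False then have "i < k" using k by simp
      then have "T $$ (k,i) = 0" using ut T k by (auto simp: upper_triangular_def)
      then show ?thesis by simp
    qed
  qed
  finally show ?thesis using dg[OF i] by (simp add: field_simps)
qed

lemma dlam_formula:
  fixes A :: "real mat"
  assumes A: "A \<in> carrier_mat n n" and cp: "char_poly A = (\<Prod>e\<leftarrow>es. [:-e,1:])"
    and pos: "\<forall>e\<in>set es. e + lam \<noteq> 0"
  shows "dlam n A lam = (\<Sum>e\<leftarrow>es. e / (e + lam))"
proof -
  obtain B P Q where sd: "schur_decomposition A es = (B,P,Q)"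
    by (cases "schur_decomposition A es") auto
  from schur_decomposition[OF A cp sd] have sim: "similar_mat_wit A B P Q"
    and ut: "upper_triangular B" and dg: "diag_mat B = es" by auto
  from sim A have B: "B \<in> carrier_mat n n" and P: "P \<in> carrier_mat n n" and Q: "Q \<in> carrier_mat n n"
    and PQ: "P * Q = 1\<^sub>m n" and QP: "Q * P = 1\<^sub>m n" and AB: "A = P * B * Q"
    unfolding similar_mat_wit_def Let_def by auto
  have len: "length es = n" using dg B by (auto simp: diag_mat_def)
  have Bd: "B $$ (i,i) = es ! i" if "i < n" for i
    using that B unfolding dg[symmetric] by (auto simp: diag_mat_def)
  define M where "M = A + lam \<cdot>\<^sub>m 1\<^sub>m n"
  define T where "T = B + lam \<cdot>\<^sub>m 1\<^sub>m n"
  have M: "M \<in> carrier_mat n n" unfolding M_def using A by auto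
  have T: "T \<in> carrier_mat n n" unfolding T_def using B by auto
  have QAP: "Q * A * P = B"
  proof -
    have "Q * A * P = (Q * P) * B * (Q * P)" unfolding AB using P Q B
      by (simp add: assoc_mult_mat[of _ n n _ n _ n])
    also have "\<dots> = B" unfolding QP using B by simp
    finally show ?thesis .
  qed
  have TQMP: "T = Q * M * P"
  proof -
    have "Q * M = Q * A + lam \<cdot>\<^sub>m Q" unfolding M_def using Q A
      by (simp add: mult_add_distrib_mat[of Q n n] mult_smult_distrib[OF Q one_carrier_mat] right_mult_one_mat)
    then have "Q * M * P = Q * A * P + lam \<cdot>\<^sub>m (Q * P)" using Q A P
      by (simp add: add_mult_distrib_mat[of _ n n] mult_smult_assoc_mat[of Q n n])
    then show ?thesis unfolding QAP QP T_def by simp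
  qed
  have utT: "upper_triangular T" using ut B unfolding T_def upper_triangular_def by auto
  have Td: "T $$ (i,i) = es ! i + lam" if "i < n" for i
    using that B Bd unfolding T_def by auto
  have Tnz: "T $$ (i,i) \<noteq> 0" if "i < n" for i
    using Td[OF that] pos len that by auto
  have "det T \<noteq> 0"
    unfolding det_upper_triangular[OF utT T] using Tnz T
    by (auto simp: diag_mat_def prod_list_zero_iff)
  moreover have "det T = det M"
  proof -
    have "det T = det Q * det M * det P" unfolding TQMP using Q M P
      by (simp add: det_mult[of _ n])
    also have "\<dots> = det M * det (Q * P)" using Q P by (simp add: det_mult[of _ n])
    finally show ?thesis unfolding QP by simp
  qed
  ultimately have "det M \<noteq> 0" by simp
  then have "M \<in> Units (ring_mat TYPE(real) n undefined)" by (rule det_non_zero_imp_unit[OF M])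
  then obtain N where inv: "mat_inverse M = Some N"
    using mat_inverse(1)[OF M, of undefined] by (cases "mat_inverse M") auto
  from mat_inverse(2)[OF M inv] have MN: "M * N = 1\<^sub>m n" and NM: "N * M = 1\<^sub>m n"
    and N: "N \<in> carrier_mat n n" by auto
  have dl: "dlam n A lam = (\<Sum>i<n. (A * N) $$ (i,i))"
    unfolding dlam_def Let_def M_def[symmetric] inv by simp
  define R where "R = Q * N * P"
  have R: "R \<in> carrier_mat n n" unfolding R_def using Q N P by auto
  have RT: "R * T = 1\<^sub>m n"
  proof -
    have "R * T = Q * N * (P * Q) * M * P" unfolding R_def TQMP using Q N P M
      by (simp add: assoc_mult_mat[of _ n n _ n _ n])
    also have "\<dots> = Q * (N * M) * P" unfolding PQ using Q N P M
      by (simp add: assoc_mult_mat[of _ n n _ n _ n])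
    also have "\<dots> = 1\<^sub>m n" unfolding NM using Q P by (simp add: QP)
    finally show ?thesis .
  qed
  have e1: "A * N = P * (B * Q * N)"
    unfolding AB using P B Q N by (simp add: assoc_mult_mat[of _ n n _ n _ n])
  have e2: "B * Q * N * P = B * R"
    unfolding R_def using P B Q N by (simp add: assoc_mult_mat[of _ n n _ n _ n])
  have "(\<Sum>i<n. (A * N) $$ (i,i)) = (\<Sum>i<n. (P * (B * Q * N)) $$ (i,i))"
    unfolding e1 ..
  also have "\<dots> = (\<Sum>i<n. ((B * Q * N) * P) $$ (i,i))"
    by (rule trace_comm_sq) (use P B Q N in auto)
  also have "\<dots> = (\<Sum>i<n. (B * R) $$ (i,i))"
    unfolding e2 ..
  also have "\<dots> = (\<Sum>i<n. es ! i / (es ! i + lam))"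
  proof (rule sum.cong[OF refl])
    fix i assume "i \<in> {..<n}"
    then have i: "i < n" by simp
    have "(B * R) $$ (i,i) = (\<Sum>k<n. B $$ (i,k) * R $$ (k,i))"
      using B R i by (simp del: index_mult_mat add: mult_entry)
    also have "\<dots> = B $$ (i,i) * R $$ (i,i)"
    proof (rule sum_single_nz[OF i])
      fix k assume k: "k < n" "k \<noteq> i"
      show "B $$ (i,k) * R $$ (k,i) = 0"
      proof (cases "k < i")
        case True then have "B $$ (i,k) = 0" using ut B i by (auto simp: upper_triangular_def)
        then show ?thesis by simp
      next
        case False then have "i < k" using k by simp
        then show ?thesis using tri_left_inv_lower[OF T R utT Tnz RT, of i k] k by simp
      qed
    qed
    also have "\<dots> = es ! i / (es ! i + lam)"
      using tri_left_inv_diag[OF T R utT Tnz RT i] Td[OF i] Bd[OF i] by simp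
    finally show "(B * R) $$ (i,i) = es ! i / (es ! i + lam)" .
  qed
  also have "\<dots> = (\<Sum>e\<leftarrow>es. e / (e + lam))"
    by (simp add: sum_list_sum_nth len atLeast0LessThan)
  finally show ?thesis unfolding dl .
qed

lemma w_deriv:
  assumes lam: "lam > (0::real)" and x: "x > 0"
  shows "((\<lambda>t. - lam / (t + lam)) has_real_derivative lam / (x + lam)^2) (at x)"
  using lam x by (auto intro!: derivative_eq_intros simp: power2_eq_square field_simps)

lemma w_cont:
  assumes lam: "lam > (0::real)" and x: "x > 0"
  shows "isCont (\<lambda>t. lam / (t + lam)^2) x"
  using lam x by (auto intro!: continuous_intros)

lemma w_integrable:
  assumes lam: "lam > (0::real)"
  shows "integrable lborel (\<lambda>t. indicator {0<..} t * (lam / (t + lam)^2))"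
proof -
  have "set_integrable lborel (einterval 0 \<infinity>) (\<lambda>t. lam / (t + lam)^2)"
  proof (rule interval_integral_FTC_nonneg(1)[where F="\<lambda>t. - lam / (t + lam)" and A="-1" and B=0])
    show "((\<lambda>t. - lam / (t + lam)) has_real_derivative lam / (x + lam)^2) (at x)"
      if "0 < ereal x" "ereal x < \<infinity>" for x using that w_deriv[OF lam, of x] by (simp add: zero_ereal_def)
    show "isCont (\<lambda>t. lam / (t + lam)^2) x" if "0 < ereal x" "ereal x < \<infinity>" for x
      using that w_cont[OF lam, of x] by (simp add: zero_ereal_def)
    show "AE x in lborel. 0 < ereal x \<longrightarrow> ereal x < \<infinity> \<longrightarrow> 0 \<le> lam / (x + lam)^2"
      using lam by auto
    show "(((\<lambda>t. - lam / (t + lam)) \<circ> real_of_ereal) \<longlongrightarrow> -1) (at_right 0)"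
      using lam by (auto simp: zero_ereal_def ereal_tendsto_simps intro!: tendsto_eq_intros)
    show "(((\<lambda>t. - lam / (t + lam)) \<circ> real_of_ereal) \<longlongrightarrow> 0) (at_left \<infinity>)"
      unfolding ereal_tendsto_simps by real_asymp
  qed simp
  moreover have "einterval 0 \<infinity> = {0<..}" by (auto simp: einterval_def zero_ereal_def)
  ultimately show ?thesis by (simp add: set_integrable_def mult.commute)
qed

lemma w_piece:
  assumes lam: "lam > (0::real)" and e: "e \<ge> 0"
  shows "integrable lborel (\<lambda>t. indicator {0<..<e} t * (lam / (t + lam)^2))"
    and "(\<integral>t. indicator {0<..<e} t * (lam / (t + lam)^2) \<partial>lborel) = e / (e + lam)"
proof -
  have "integrable lborel (\<lambda>t. indicator {0<..<e} t * (lam / (t + lam)^2)) \<and>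
        (\<integral>t. indicator {0<..<e} t * (lam / (t + lam)^2) \<partial>lborel) = e / (e + lam)"
  proof (cases "e = 0")
    case True then show ?thesis by simp
  next
    case False
    then have e0: "0 < e" using e by simp
    have ei: "einterval 0 (ereal e) = {0<..<e}" by (auto simp: einterval_def zero_ereal_def)
    let ?F = "\<lambda>t. - lam / (t + lam)"
    have d: "(?F has_real_derivative lam / (x + lam)^2) (at x)"
      if "0 < ereal x" "ereal x < ereal e" for x using that w_deriv[OF lam, of x] by (simp add: zero_ereal_def)
    have c: "isCont (\<lambda>t. lam / (t + lam)^2) x" if "0 < ereal x" "ereal x < ereal e" for x
      using that w_cont[OF lam, of x] by (simp add: zero_ereal_def)
    have nn: "AE x in lborel. 0 < ereal x \<longrightarrow> ereal x < ereal e \<longrightarrow> 0 \<le> lam / (x + lam)^2"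
      using lam by auto
    have l1: "((?F \<circ> real_of_ereal) \<longlongrightarrow> -1) (at_right 0)"
      using lam by (auto simp: zero_ereal_def ereal_tendsto_simps intro!: tendsto_eq_intros)
    have l2: "((?F \<circ> real_of_ereal) \<longlongrightarrow> ?F e) (at_left (ereal e))"
      unfolding ereal_tendsto_simps using lam e0
      by (auto intro!: tendsto_eq_intros)
    have lt: "0 < ereal e" using e0 by (simp add: zero_ereal_def)
    note r = interval_integral_FTC_nonneg[OF lt d c nn l1 l2]
    from r(1) have "integrable lborel (\<lambda>t. indicator {0<..<e} t * (lam / (t + lam)^2))"
      unfolding set_integrable_def ei by (simp add: mult.commute)
    moreover from r(2) have "(\<integral>t. indicator {0<..<e} t * (lam / (t + lam)^2) \<partial>lborel) = e / (e + lam)"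
      unfolding interval_lebesgue_integral_def set_lebesgue_integral_def ei using lt lam e0
      by (simp add: field_simps)
    ultimately show ?thesis by simp
  qed
  then show "integrable lborel (\<lambda>t. indicator {0<..<e} t * (lam / (t + lam)^2))"
    and "(\<integral>t. indicator {0<..<e} t * (lam / (t + lam)^2) \<partial>lborel) = e / (e + lam)" by auto
qed


lemma len_filter_sum: "real (length (filter P xs)) = (\<Sum>x\<leftarrow>xs. if P x then 1 else 0)"
  by (induct xs) auto

lemma len_filter_mono: "u \<le> v \<Longrightarrow> length (filter (\<lambda>e. e \<le> u) es) \<le> length (filter (\<lambda>e. e \<le> (v::real)) es)"
  by (induct es) auto

lemma integrand_eq:
  assumes d: "length es > 0"
  shows "indicator {0<..} t * (lam / (t + lam)^2) * (1 - real (length (filter (\<lambda>e. e \<le> t) es)) / real (length es))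
    = (\<Sum>e\<leftarrow>es. indicator {0<..<e} t * (lam / (t + lam)^2)) / real (length es)"
proof (cases "t > 0")
  case False
  then show ?thesis by (simp add: indicator_def)
next
  case True
  have "real (length es) = real (length (filter (\<lambda>e. e \<le> t) es)) + real (length (filter (\<lambda>e. \<not> e \<le> t) es))"
    using sum_length_filter_compl[of "\<lambda>e. e \<le> t" es] by simp
  then have dl: "real (length es) - real (length (filter (\<lambda>e. e \<le> t) es)) = real (length (filter (\<lambda>e. \<not> e \<le> t) es))"
    by linarith
  have Dp: "real (length es) > 0" using d by simp
  have "1 - real (length (filter (\<lambda>e. e \<le> t) es)) / real (length es)
      = (real (length es) - real (length (filter (\<lambda>e. e \<le> t) es))) / real (length es)"
    using Dp by (simp add: field_simps)
  also have "\<dots> = real (length (filter (\<lambda>e. \<not> e \<le> t) es)) / real (length es)"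
    unfolding dl ..
  also have "real (length (filter (\<lambda>e. \<not> e \<le> t) es)) = (\<Sum>e\<leftarrow>es. indicator {0<..<e} t)"
    unfolding len_filter_sum using True by (intro arg_cong[where f=sum_list] map_cong) (auto simp: indicator_def)
  finally have c: "1 - real (length (filter (\<lambda>e. e \<le> t) es)) / real (length es) = (\<Sum>e\<leftarrow>es. indicator {0<..<e} t) / real (length es)" .
  have sm: "(\<Sum>e\<leftarrow>es. indicator {0<..<e} t * (lam / (t + lam)^2)) = (\<Sum>e\<leftarrow>es. indicator {0<..<e} t) * (lam / (t + lam)^2)"
    by (rule sum_list_mult_const)
  show ?thesis unfolding sm c using True by simp
qed

lemma int_list:
  assumes lam: "lam > (0::real)"
  shows "(\<forall>e\<in>set es. 0 \<le> e) \<Longrightarrow> integrable lborel (\<lambda>t. \<Sum>e\<leftarrow>es. indicator {0<..<e} t * (lam / (t + lam)^2)) \<and>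
    (\<integral>t. (\<Sum>e\<leftarrow>es. indicator {0<..<e} t * (lam / (t + lam)^2)) \<partial>lborel) = (\<Sum>e\<leftarrow>es. e / (e + lam))"
proof (induct es)
  case Nil then show ?case by simp
next
  case (Cons e es)
  then have e: "0 \<le> e" and IH: "integrable lborel (\<lambda>t. \<Sum>e\<leftarrow>es. indicator {0<..<e} t * (lam / (t + lam)^2))"
    "(\<integral>t. (\<Sum>e\<leftarrow>es. indicator {0<..<e} t * (lam / (t + lam)^2)) \<partial>lborel) = (\<Sum>e\<leftarrow>es. e / (e + lam))"
    by auto
  note p = w_piece[OF lam e]
  show ?case using IH p
    by (simp add: integral_add)
qed

theorem lemmaA2:
  fixes Sigma :: "nat \<Rightarrow> real mat" and d :: "nat \<Rightarrow> nat" and y :: real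
    and F :: "real \<Rightarrow> real"
  assumes psd: "\<And>n. psd_mat (d n) (Sigma n)"
    and d_inf: "filterlim d at_top sequentially"
    and ratio: "(\<lambda>n. real (d n) / real n) \<longlonglongrightarrow> y"
    and y_nonneg: "0 \<le> y" and y_lt1: "y < 1"
    and F_dist: "\<exists>M. real_distribution M \<and> F = cdf M"
    and conv: "AE u in lborel. u > 0 \<longrightarrow> (\<lambda>n. esd (d n) (Sigma n) u) \<longlonglongrightarrow> F u"
  shows "\<forall>lam > 0. convergent (\<lambda>n. dlam (d n) (Sigma n) lam / real n)"
proof (intro allI impI)
  fix lam :: real assume lam: "lam > 0"
  define P where "P n es \<longleftrightarrow> length es = d n \<and> (\<forall>e\<in>set es. 0 \<le> e) \<and> char_poly (Sigma n) = (\<Prod>e\<leftarrow>es. [:-e,1:])" for n es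
  define es where "es n = (SOME es. P n es)" for n
  have es: "P n (es n)" for n
    unfolding es_def by (rule someI_ex) (use psd_factor[OF psd[of n]] in \<open>auto simp: P_def\<close>)
  have len: "length (es n) = d n" and nn: "\<forall>e\<in>set (es n). 0 \<le> e"
    and cp: "char_poly (Sigma n) = (\<Prod>e\<leftarrow>es n. [:-e,1:])" for n
    using es[of n] unfolding P_def by auto
  have carr: "Sigma n \<in> carrier_mat (d n) (d n)" for n using psd[of n] unfolding psd_mat_def by auto
  have dl: "dlam (d n) (Sigma n) lam = (\<Sum>e\<leftarrow>es n. e / (e + lam))" for n
    by (rule dlam_formula[OF carr cp]) (use nn lam in force)
  have esd: "esd (d n) (Sigma n) u = real (length (filter (\<lambda>e. e \<le> u) (es n))) / real (d n)" for n u
    by (rule esd_formula[OF cp])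
  define w where "w t = lam / (t + lam)^2" for t
  define s where "s n t = indicator {0<..} t * w t * (1 - esd (d n) (Sigma n) t)" for n t
  define f where "f t = indicator {0<..} t * w t * (1 - F t)" for t
  obtain M where M: "real_distribution M" and FM: "F = cdf M" using F_dist by auto
  have Fmono: "mono F" unfolding FM
    by (rule monoI, rule finite_borel_measure.cdf_nondecreasing[OF real_distribution.finite_borel_measure_M[OF M]])
  have Fmeas: "F \<in> borel_measurable borel" by (rule borel_measurable_mono[OF Fmono])
  have esd_mono: "mono (\<lambda>u. esd (d n) (Sigma n) u)" for n
    unfolding esd by (intro monoI divide_right_mono) (auto intro: len_filter_mono)
  have esd_meas: "(\<lambda>u. esd (d n) (Sigma n) u) \<in> borel_measurable borel" for n
    by (rule borel_measurable_mono[OF esd_mono])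
  have esd_bnd: "0 \<le> esd (d n) (Sigma n) u \<and> esd (d n) (Sigma n) u \<le> 1" for n u
  proof -
    have "length (filter (\<lambda>e. e \<le> u) (es n)) \<le> d n" using len[of n] length_filter_le by metis
    then show ?thesis unfolding esd by (cases "d n = 0") (auto simp: field_simps)
  qed
  have wint: "integrable lborel (\<lambda>t. indicator {0<..} t * w t)"
    using w_integrable[OF lam] unfolding w_def .
  have wmeas: "w \<in> borel_measurable borel" unfolding w_def by measurable
  have lim: "(\<lambda>n. integral\<^sup>L lborel (s n)) \<longlonglongrightarrow> integral\<^sup>L lborel f"
  proof (rule integral_dominated_convergence[where w="\<lambda>t. indicator {0<..} t * w t"])
    show "f \<in> borel_measurable lborel" unfolding f_def using Fmeas wmeas by measurable
    show "s n \<in> borel_measurable lborel" for n unfolding s_def using esd_meas[of n] wmeas by measurable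
    show "integrable lborel (\<lambda>t. indicator {0<..} t * w t)" by (rule wint)
    show "AE x in lborel. (\<lambda>n. s n x) \<longlonglongrightarrow> f x"
      using conv
    proof eventually_elim
      case (elim x)
      show ?case
      proof (cases "x > 0")
        case True
        then show ?thesis unfolding s_def f_def using elim
          by (auto intro!: tendsto_intros)
      next
        case False
        then show ?thesis unfolding s_def f_def by simp
      qed
    qed
    show "AE x in lborel. norm (s n x) \<le> indicator {0<..} x * w x" for n
    proof (rule AE_I2)
      fix x
      have w0: "0 \<le> w x" unfolding w_def using lam by simp
      have "\<bar>1 - esd (d n) (Sigma n) x\<bar> \<le> 1" using esd_bnd[of n x] by simp
      then show "norm (s n x) \<le> indicator {0<..} x * w x"
        unfolding s_def using w0 by (auto simp: indicator_def abs_mult intro: mult_left_le)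
    qed
  qed
  have ev: "eventually (\<lambda>n. integral\<^sup>L lborel (s n) = dlam (d n) (Sigma n) lam / real (d n)) sequentially"
  proof -
    have "eventually (\<lambda>n. d n \<ge> 1) sequentially" using d_inf by (simp add: filterlim_at_top)
    then show ?thesis
    proof eventually_elim
      case (elim n)
      then have dpos: "length (es n) > 0" using len[of n] by simp
      have "s n = (\<lambda>t. (\<Sum>e\<leftarrow>es n. indicator {0<..<e} t * (lam / (t + lam)^2)) / real (length (es n)))"
        unfolding s_def w_def esd unfolding len[symmetric] by (rule ext, rule integrand_eq[OF dpos])
      then have "integral\<^sup>L lborel (s n) = (\<Sum>e\<leftarrow>es n. e / (e + lam)) / real (length (es n))"
        using int_list[OF lam nn[of n]] by simp
      then show ?case unfolding dl len .
    qed
  qed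
  have G: "(\<lambda>n. dlam (d n) (Sigma n) lam / real (d n)) \<longlonglongrightarrow> integral\<^sup>L lborel f"
    using lim ev by (rule Lim_transform_eventually)
  have eq: "dlam (d n) (Sigma n) lam / real n = (real (d n) / real n) * (dlam (d n) (Sigma n) lam / real (d n))" for n
  proof (cases "d n = 0")
    case True
    then show ?thesis unfolding dlam_def by simp
  next
    case False then show ?thesis by simp
  qed
  have "(\<lambda>n. dlam (d n) (Sigma n) lam / real n) \<longlonglongrightarrow> y * integral\<^sup>L lborel f"
    unfolding eq by (rule tendsto_mult[OF ratio G])
  then show "convergent (\<lambda>n. dlam (d n) (Sigma n) lam / real n)" unfolding convergent_def by blast
qed

end
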